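(* Consider the system \[ \begin{aligned} \dot S_h(t)&=\beta_h-C_{vh}\frac{I_v(t)}{N_v(t)}S_h(t)-\mu_hS_h(t),\\ \dot I_h(t)&=C_{vh}\frac{I_v(t-\tau)}{N_v(t-\tau)}S_h(t-\tau)-\mu_hI_h(t),\\ \dot S_v(t)&=\beta_v-C_{hv}I_h(t)S_v(t)-\mu_vS_v(t),\\ \dot I_v(t)&=C_{hv}I_h(t)S_v(t)-\mu_vI_v(t), \end{aligned} \] with $N_v=S_v+I_v$, positive parameters $\beta_h,\beta_v,\mu_h,\mu_v,C_{vh},C_{hv}$ and $\tau\ge0$. Let $R_0=\sqrt{C_{vh}C_{hv}\beta_h/(\mu_h^2\mu_v)}$ and, when $R_0>1$, let $I_h^*$ be the $I_h$-component of the unique equilibrium with all components positive. If $R_0>1$ and $\theta\in(0,1)$, then for the solution through any initial function $\varphi\in D$ one has $\limsup_{t\to\infty}I_h(t)>\theta I_h^*$.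
   Context: $C_+=\{\varphi\in C([-\tau,0],\mathbb{R}_+^4):\varphi_3(\theta)+\varphi_4(\theta)>0\ \forall\theta\in[-\tau,0]\}$ with the sup-norm, and $D=\{\varphi\in C_+:\varphi_2(0)>0\}$. *)

theory Defs
  imports "HOL-Analysis.Analysis"
begin

text \<open>Components of a state vector x :: real^4 are (S_h, I_h, S_v, I_v) = (x$1, x$2, x$3, x$4).\<close>

definition C_plus :: "real \<Rightarrow> (real \<Rightarrow> real^4) set" where
  "C_plus \<tau> = {\<phi>. continuous_on {-\<tau>..0} \<phi> \<and>
      (\<forall>s\<in>{-\<tau>..0}. \<forall>i. \<phi> s $ i \<ge> 0) \<and>
      (\<forall>s\<in>{-\<tau>..0}. \<phi> s $ 3 + \<phi> s $ 4 > 0)}"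

definition D_set :: "real \<Rightarrow> (real \<Rightarrow> real^4) set" where
  "D_set \<tau> = {\<phi> \<in> C_plus \<tau>. \<phi> 0 $ 2 > 0}"

definition is_solution ::
  "real \<Rightarrow> real \<Rightarrow> real \<Rightarrow> real \<Rightarrow> real \<Rightarrow> real \<Rightarrow> real \<Rightarrow> (real \<Rightarrow> real^4) \<Rightarrow> (real \<Rightarrow> real^4) \<Rightarrow> bool"
  where
  "is_solution \<beta>h \<beta>v \<mu>h \<mu>v Cvh Chv \<tau> \<phi> x \<longleftrightarrow>
     (\<forall>s\<in>{-\<tau>..0}. x s = \<phi> s) \<and>
     continuous_on {-\<tau>..} x \<and>
     (\<forall>t\<ge>0.
        ((\<lambda>s. x s $ 1) has_real_derivative
            (\<beta>h - Cvh * (x t $ 4 / (x t $ 3 + x t $ 4)) * x t $ 1 - \<mu>h * x t $ 1)) (at t within {0..}) \<and>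
        ((\<lambda>s. x s $ 2) has_real_derivative
            (Cvh * (x (t - \<tau>) $ 4 / (x (t - \<tau>) $ 3 + x (t - \<tau>) $ 4)) * x (t - \<tau>) $ 1
              - \<mu>h * x t $ 2)) (at t within {0..}) \<and>
        ((\<lambda>s. x s $ 3) has_real_derivative
            (\<beta>v - Chv * x t $ 2 * x t $ 3 - \<mu>v * x t $ 3)) (at t within {0..}) \<and>
        ((\<lambda>s. x s $ 4) has_real_derivative
            (Chv * x t $ 2 * x t $ 3 - \<mu>v * x t $ 4)) (at t within {0..}))"

definition is_pos_equilibrium ::
  "real \<Rightarrow> real \<Rightarrow> real \<Rightarrow> real \<Rightarrow> real \<Rightarrow> real \<Rightarrow> real \<Rightarrow> real \<Rightarrow> real \<Rightarrow> real \<Rightarrow> bool" where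
  "is_pos_equilibrium \<beta>h \<beta>v \<mu>h \<mu>v Cvh Chv Sh Ih Sv Iv \<longleftrightarrow>
     Sh > 0 \<and> Ih > 0 \<and> Sv > 0 \<and> Iv > 0 \<and>
     \<beta>h - Cvh * (Iv / (Sv + Iv)) * Sh - \<mu>h * Sh = 0 \<and>
     Cvh * (Iv / (Sv + Iv)) * Sh - \<mu>h * Ih = 0 \<and>
     \<beta>v - Chv * Ih * Sv - \<mu>v * Sv = 0 \<and>
     Chv * Ih * Sv - \<mu>v * Iv = 0"

definition R0 :: "real \<Rightarrow> real \<Rightarrow> real \<Rightarrow> real \<Rightarrow> real \<Rightarrow> real" where
  "R0 \<beta>h \<mu>h \<mu>v Cvh Chv = sqrt (Cvh * Chv * \<beta>h / (\<mu>h^2 * \<mu>v))"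

end

theory Submission
  imports Defs
begin


lemma core_interval:
  fixes y y' :: "real \<Rightarrow> real"
  assumes B: "B > 0" and Tb: "T \<le> b" and cont: "continuous_on {T..b} y"
    and der: "\<And>t. T < t \<Longrightarrow> t < b \<Longrightarrow> (y has_real_derivative y' t) (at t)"
    and ineq: "\<And>t. T < t \<Longrightarrow> t < b \<Longrightarrow> y' t + B * y t \<ge> A"
  shows "y b \<ge> A/B + (y T - A/B) * exp (-B*(b-T))"
proof -
  define z where "z = (\<lambda>u. (y u - A / B) * exp (B * u))"
  have "z T \<le> z b"
  proof (rule DERIV_nonneg_imp_increasing_open[OF Tb])
    fix t assume t: "T < t" "t < b"
    have "(z has_real_derivative (y' t * exp (B*t) + (y t - A/B) * (exp (B*t) * B))) (at t)"
      unfolding z_def using der[OF t]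
      by (auto intro!: derivative_eq_intros)
    moreover have "y' t * exp (B*t) + (y t - A/B) * (exp (B*t) * B) = (y' t + B * y t - A) * exp (B*t)"
      using B by (simp add: field_simps)
    moreover have "(y' t + B * y t - A) * exp (B*t) \<ge> 0" using ineq[OF t] by simp
    ultimately show "\<exists>y. (z has_real_derivative y) (at t) \<and> 0 \<le> y" by metis
  next
    show "continuous_on {T..b} z" unfolding z_def
      by (intro continuous_intros cont)
  qed
  hence "(y T - A/B) * exp (B*T) / exp (B*b) \<le> (y b - A/B)"
    unfolding z_def by (simp add: divide_le_eq)
  moreover have "(y T - A/B) * exp (B*T) / exp (B*b) = (y T - A/B) * exp (-B*(b-T))"
  proof -
    have "exp (-B*(b-T)) = exp (B*T) / exp (B*b)"
      by (metis exp_diff minus_diff_eq mult.commute right_diff_distrib mult_minus_left)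
    thus ?thesis by simp
  qed
  ultimately show ?thesis by simp
qed

lemma core_global:
  fixes y y' :: "real \<Rightarrow> real"
  assumes B: "B > 0" and cont: "continuous_on {T..} y"
    and der: "\<And>t. T < t \<Longrightarrow> (y has_real_derivative y' t) (at t)"
    and ineq: "\<And>t. T < t \<Longrightarrow> y' t + B * y t \<ge> A"
    and t: "T \<le> t"
  shows "y t \<ge> A/B + (y T - A/B) * exp (-B*(t-T))"
  by (rule core_interval[OF B t continuous_on_subset[OF cont] der ineq]) auto

lemma core_ev_lower:
  fixes y y' :: "real \<Rightarrow> real"
  assumes B: "B > 0" and cont: "continuous_on {T..} y"
    and der: "\<And>t. T < t \<Longrightarrow> (y has_real_derivative y' t) (at t)"
    and ineq: "\<And>t. T < t \<Longrightarrow> y' t + B * y t \<ge> A"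
    and e: "e > 0"
  shows "eventually (\<lambda>t. y t \<ge> A/B - e) at_top"
proof -
  define c where "c = \<bar>y T - A/B\<bar>"
  show ?thesis unfolding eventually_at_top_linorder
  proof (intro exI allI impI)
    fix t assume t: "T + c/(B*e) \<le> t"
    have c0: "c \<ge> 0" unfolding c_def by simp
    have tT: "T \<le> t" using t c0 B e by (smt (verit) divide_nonneg_pos mult_pos_pos)
    have 1: "y t \<ge> A/B + (y T - A/B) * exp (-B*(t-T))"
      by (rule core_global[OF B cont der ineq tT])
    have "(y T - A/B) * exp (-B*(t-T)) \<ge> - c * exp (-B*(t-T))"
    proof -
      have "- c \<le> y T - A/B" unfolding c_def by simp
      thus ?thesis by (metis mult_minus_left exp_ge_zero mult_right_mono)
    qed
    moreover have "c * exp (-B*(t-T)) \<le> e"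
    proof -
      have "c/e \<le> B*(t-T)" using t B e by (simp add: field_simps)
      also have "\<dots> \<le> exp (B*(t-T))" using exp_ge_add_one_self[of "B*(t-T)"] by linarith
      finally have "c \<le> e * exp (B*(t-T))" using e by (simp add: divide_le_eq mult.commute)
      hence "c * exp (-B*(t-T)) \<le> e * exp (B*(t-T)) * exp (-B*(t-T))"
        by (simp add: mult_right_mono)
      also have "\<dots> = e" by (simp add: mult.assoc flip: exp_add)
      finally show ?thesis .
    qed
    ultimately show "y t \<ge> A/B - e" using 1 by linarith
  qed
qed

lemma core_ev_upper:
  fixes y y' :: "real \<Rightarrow> real"
  assumes B: "B > 0" and cont: "continuous_on {T..} y"
    and der: "\<And>t. T < t \<Longrightarrow> (y has_real_derivative y' t) (at t)"
    and ineq: "\<And>t. T < t \<Longrightarrow> y' t + B * y t \<le> A"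
    and e: "e > 0"
  shows "eventually (\<lambda>t. y t \<le> A/B + e) at_top"
proof -
  have "eventually (\<lambda>t. (- y t) \<ge> (-A)/B - e) at_top"
    by (rule core_ev_lower[where y="\<lambda>t. - y t" and y'="\<lambda>t. - y' t", OF B])
      (use cont der e in \<open>auto intro!: continuous_intros derivative_intros\<close>,
       use ineq in \<open>smt (verit)\<close>)
  thus ?thesis by eventually_elim simp
qed



lemma left_limit_ge:
  fixes u :: "real \<Rightarrow> real"
  assumes "isCont u t1" "T < t1" "\<And>s. T < s \<Longrightarrow> s < t1 \<Longrightarrow> u s > c"
  shows "u t1 \<ge> c"
proof -
  have "(u \<longlongrightarrow> u t1) (at_left t1)"
    using assms(1) unfolding isCont_def filterlim_at_split by simp
  moreover have "eventually (\<lambda>s. c \<le> u s) (at_left t1)"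
    using eventually_at_left_real[OF assms(2)] by eventually_elim (use assms(3) in force)
  ultimately show ?thesis
    by (rule tendsto_lowerbound) (simp add: trivial_limit_at_left_real)
qed

lemma cross:
  fixes u v u' v' :: "real \<Rightarrow> real"
  assumes tau: "\<tau> \<ge> 0"
    and win: "\<And>s. T - \<tau> \<le> s \<Longrightarrow> s \<le> T \<Longrightarrow> u s > c \<and> v s > c"
    and du: "\<And>t. t > T \<Longrightarrow> (u has_real_derivative u' t) (at t)"
    and dv: "\<And>t. t > T \<Longrightarrow> (v has_real_derivative v' t) (at t)"
    and cu: "continuous_on {T..} u" and cv: "continuous_on {T..} v"
    and pu: "\<And>t. t > T \<Longrightarrow> v (t - \<tau>) \<ge> c \<Longrightarrow> u t = c \<Longrightarrow> u' t > 0"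
    and pv: "\<And>t. t > T \<Longrightarrow> u t \<ge> c \<Longrightarrow> v t = c \<Longrightarrow> v' t > 0"
    and t: "t \<ge> T"
  shows "u t > c \<and> v t > c"
proof (rule ccontr)
  assume nt: "\<not> (u t > c \<and> v t > c)"
  define E where "E = ({T..} \<inter> u -` {..c}) \<union> ({T..} \<inter> v -` {..c})"
  have "t \<in> E" using nt t unfolding E_def by auto
  hence Ene: "E \<noteq> {}" by auto
  have clE: "closed E" unfolding E_def
    by (intro closed_Un continuous_closed_preimage cu cv) auto
  have bdd: "bdd_below E" unfolding E_def by (auto intro: bdd_belowI[where m=T])
  define t1 where "t1 = Inf E"
  have t1E: "t1 \<in> E" unfolding t1_def by (rule closed_contains_Inf[OF Ene bdd clE])
  have notE: "s \<notin> E" if "s < t1" for s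
    using that cInf_lower[OF _ bdd, of s] unfolding t1_def by force
  have t1T: "t1 \<ge> T" using t1E unfolding E_def by auto
  have "t1 \<noteq> T" using t1E win[of T] tau unfolding E_def by force
  hence t1T': "t1 > T" using t1T by simp
  have before: "u s > c \<and> v s > c" if "T - \<tau> \<le> s" "s < t1" for s
  proof (cases "s \<le> T")
    case True thus ?thesis using win that by auto
  next
    case False thus ?thesis using notE[OF that(2)] unfolding E_def by auto
  qed
  have ut1: "u t1 \<ge> c"
    by (rule left_limit_ge[OF DERIV_isCont[OF du[OF t1T']] t1T']) (use before tau in auto)
  have vt1: "v t1 \<ge> c"
    by (rule left_limit_ge[OF DERIV_isCont[OF dv[OF t1T']] t1T']) (use before tau in auto)
  have uv_le: "u t1 \<le> c \<or> v t1 \<le> c" using t1E unfolding E_def by auto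
  have vdel: "v (t1 - \<tau>) \<ge> c"
  proof (cases "\<tau> = 0")
    case True thus ?thesis using vt1 by simp
  next
    case False thus ?thesis using before[of "t1 - \<tau>"] tau t1T by auto
  qed
  have h0: "t1 - T > 0" using t1T' by simp
  show False
  proof (cases "u t1 \<le> c")
    case True
    hence "u t1 = c" using ut1 by simp
    hence "u' t1 > 0" using pu[OF t1T' vdel] by simp
    then obtain d where d: "d > 0" "\<And>h. h > 0 \<Longrightarrow> h < d \<Longrightarrow> u (t1 - h) < u t1"
      using DERIV_pos_inc_left[OF du[OF t1T']] by blast
    define h where "h = min d (t1 - T) / 2"
    have h: "h > 0" "h < d" "h < t1 - T" using d h0 unfolding h_def by auto
    have "u (t1 - h) < c" using d(2)[OF h(1,2)] \<open>u t1 = c\<close> by simp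
    moreover have "u (t1 - h) > c" using before[of "t1 - h"] h tau by auto
    ultimately show False by simp
  next
    case False
    hence "v t1 = c" using uv_le vt1 by simp
    hence "v' t1 > 0" using pv[OF t1T' ut1] by simp
    then obtain d where d: "d > 0" "\<And>h. h > 0 \<Longrightarrow> h < d \<Longrightarrow> v (t1 - h) < v t1"
      using DERIV_pos_inc_left[OF dv[OF t1T']] by blast
    define h where "h = min d (t1 - T) / 2"
    have h: "h > 0" "h < d" "h < t1 - T" using d h0 unfolding h_def by auto
    have "v (t1 - h) < c" using d(2)[OF h(1,2)] \<open>v t1 = c\<close> by simp
    moreover have "v (t1 - h) > c" using before[of "t1 - h"] h tau by auto
    ultimately show False by simp
  qed
qed

lemma right_limit_le:
  fixes y :: "real \<Rightarrow> real"
  assumes "continuous_on {0..} y" "0 \<le> t0" "t0 < t" "\<And>s. t0 < s \<Longrightarrow> s < t \<Longrightarrow> y s < 0"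
  shows "y t0 \<le> 0"
proof -
  have "(y \<longlongrightarrow> y t0) (at t0 within {0..})"
    using assms(1,2) unfolding continuous_on_def by auto
  hence "(y \<longlongrightarrow> y t0) (at_right t0)"
    by (rule tendsto_within_subset) (use assms(2) in auto)
  moreover have "eventually (\<lambda>s. y s \<le> 0) (at_right t0)"
    using eventually_at_right_real[OF assms(3)] by eventually_elim (use assms(4) in force)
  ultimately show ?thesis
    by (rule tendsto_upperbound) (simp add: trivial_limit_at_right_real)
qed

lemma zero_cross:
  fixes y y' :: "real \<Rightarrow> real"
  assumes cont: "continuous_on {0..} y" and y0: "y 0 \<ge> 0"
    and der: "\<And>t. t \<ge> 0 \<Longrightarrow> (y has_real_derivative y' t) (at t within {0..})"
    and pos: "\<And>t. t \<ge> 0 \<Longrightarrow> y t = 0 \<Longrightarrow> y' t > 0"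
    and t: "t \<ge> 0"
  shows "y t \<ge> 0"
proof (rule ccontr)
  assume "\<not> y t \<ge> 0"
  hence yt: "y t < 0" by simp
  define S where "S = {0..t} \<inter> y -` {0..}"
  have "0 \<in> S" using y0 t unfolding S_def by auto
  hence Sne: "S \<noteq> {}" by auto
  have clS: "closed S" unfolding S_def
    by (intro continuous_closed_preimage continuous_on_subset[OF cont]) auto
  have bdd: "bdd_above S" unfolding S_def by (auto intro: bdd_aboveI[where M=t])
  define t0 where "t0 = Sup S"
  have t0S: "t0 \<in> S" unfolding t0_def by (rule closed_contains_Sup[OF Sne bdd clS])
  have after: "y s < 0" if "t0 < s" "s \<le> t" for s
  proof (rule ccontr)
    assume "\<not> y s < 0"
    hence "s \<in> S" using that t0S unfolding S_def by auto
    hence "s \<le> t0" unfolding t0_def by (rule cSup_upper[OF _ bdd])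
    thus False using that by simp
  qed
  have t00: "0 \<le> t0" "t0 \<le> t" "y t0 \<ge> 0" using t0S unfolding S_def by auto
  have "t0 \<noteq> t" using t00 yt by auto
  hence t0t: "t0 < t" using t00 by simp
  have "y t0 \<le> 0" by (rule right_limit_le[OF cont t00(1) t0t]) (use after in auto)
  hence "y t0 = 0" using t00 by simp
  hence "y' t0 > 0" using pos t00 by simp
  then obtain d where d: "d > 0" "\<And>h. h > 0 \<Longrightarrow> t0 + h \<in> {0..} \<Longrightarrow> h < d \<Longrightarrow> y t0 < y (t0 + h)"
    using has_real_derivative_pos_inc_right[OF der[OF t00(1)]] by blast
  define h where "h = min d (t - t0) / 2"
  have h: "h > 0" "h < d" "h < t - t0" using d t0t unfolding h_def by auto
  have "y (t0 + h) > 0" using d(2)[OF h(1) _ h(2)] t00 h \<open>y t0 = 0\<close> by simp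
  moreover have "y (t0 + h) < 0" using after[of "t0 + h"] h by simp
  ultimately show False by simp
qed



lemma exp_scale_ge:
  fixes y c c2 e t :: real
  assumes "c2 > 0" "y * exp (-e*t) / c2 \<ge> c"
  shows "y \<ge> c * c2 * exp (e*t)"
proof -
  have "y * exp (-e*t) \<ge> c * c2" using assms by (simp add: le_divide_eq)
  hence "y * exp (-e*t) * exp (e*t) \<ge> c * c2 * exp (e*t)" by (simp add: mult_right_mono)
  moreover have "exp (-e*t) * exp (e*t) = 1" by (simp flip: exp_add)
  hence "y * exp (-e*t) * exp (e*t) = y" by (simp add: mult.assoc)
  ultimately show ?thesis by linarith
qed

lemma exp_scale_eq:
  fixes y c c2 e t :: real
  assumes "c2 > 0" "y * exp (-e*t) / c2 = c"
  shows "y = c * c2 * exp (e*t)"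
proof -
  have "y * exp (-e*t) = c * c2" using assms by (simp add: divide_eq_eq)
  hence "y * exp (-e*t) * exp (e*t) = c * c2 * exp (e*t)" by simp
  moreover have "exp (-e*t) * exp (e*t) = 1" by (simp flip: exp_add)
  hence "y * exp (-e*t) * exp (e*t) = y" by (simp add: mult.assoc)
  ultimately show ?thesis by linarith
qed

theorem theorem4:
  fixes \<beta>h \<beta>v \<mu>h \<mu>v Cvh Chv \<tau> \<theta> :: real
    and \<phi> x :: "real \<Rightarrow> real^4"
    and Shs Ihs Svs Ivs :: real
  assumes "\<beta>h > 0" "\<beta>v > 0" "\<mu>h > 0" "\<mu>v > 0" "Cvh > 0" "Chv > 0" "\<tau> \<ge> 0"
    and "R0 \<beta>h \<mu>h \<mu>v Cvh Chv > 1"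
    and "is_pos_equilibrium \<beta>h \<beta>v \<mu>h \<mu>v Cvh Chv Shs Ihs Svs Ivs"
    and "0 < \<theta>" "\<theta> < 1"
    and "\<phi> \<in> D_set \<tau>"
    and "is_solution \<beta>h \<beta>v \<mu>h \<mu>v Cvh Chv \<tau> \<phi> x"
  shows "Limsup at_top (\<lambda>t. ereal (x t $ 2)) > ereal (\<theta> * Ihs)"
proof -
  note bh = assms(1) and bv = assms(2) and mh = assms(3) and mv = assms(4)
    and cvh = assms(5) and chv = assms(6) and tau = assms(7)
  define Sh where "Sh = (\<lambda>t. x t $ 1)"
  define Ih where "Ih = (\<lambda>t. x t $ 2)"
  define Sv where "Sv = (\<lambda>t. x t $ 3)"
  define Iv where "Iv = (\<lambda>t. x t $ 4)"
  define N where "N = (\<lambda>t. Sv t + Iv t)"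
  define p where "p = (\<lambda>t. Iv t / N t)"
  define K where "K = \<beta>v / \<mu>v"
  have K: "K > 0" unfolding K_def using bv mv by simp
  have init: "\<And>s. s \<in> {-\<tau>..0} \<Longrightarrow> x s = \<phi> s"
    and contx: "continuous_on {-\<tau>..} x"
    and derx: "\<And>t. t \<ge> 0 \<Longrightarrow>
        ((\<lambda>s. x s $ 1) has_real_derivative
            (\<beta>h - Cvh * (x t $ 4 / (x t $ 3 + x t $ 4)) * x t $ 1 - \<mu>h * x t $ 1)) (at t within {0..}) \<and>
        ((\<lambda>s. x s $ 2) has_real_derivative
            (Cvh * (x (t - \<tau>) $ 4 / (x (t - \<tau>) $ 3 + x (t - \<tau>) $ 4)) * x (t - \<tau>) $ 1
              - \<mu>h * x t $ 2)) (at t within {0..}) \<and>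
        ((\<lambda>s. x s $ 3) has_real_derivative
            (\<beta>v - Chv * x t $ 2 * x t $ 3 - \<mu>v * x t $ 3)) (at t within {0..}) \<and>
        ((\<lambda>s. x s $ 4) has_real_derivative
            (Chv * x t $ 2 * x t $ 3 - \<mu>v * x t $ 4)) (at t within {0..})"
    using assms(13) unfolding is_solution_def by auto
  have phi: "continuous_on {-\<tau>..0} \<phi>" "\<And>s i. s \<in> {-\<tau>..0} \<Longrightarrow> \<phi> s $ i \<ge> 0"
    "\<And>s. s \<in> {-\<tau>..0} \<Longrightarrow> \<phi> s $ 3 + \<phi> s $ 4 > 0" "\<phi> 0 $ 2 > 0"
    using assms(12) unfolding D_set_def C_plus_def by auto
  define Sh' where "Sh' = (\<lambda>t. \<beta>h - Cvh * p t * Sh t - \<mu>h * Sh t)"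
  define Ih' where "Ih' = (\<lambda>t. Cvh * p (t - \<tau>) * Sh (t - \<tau>) - \<mu>h * Ih t)"
  define Sv' where "Sv' = (\<lambda>t. \<beta>v - Chv * Ih t * Sv t - \<mu>v * Sv t)"
  define Iv' where "Iv' = (\<lambda>t. Chv * Ih t * Sv t - \<mu>v * Iv t)"
  have dw: "(Sh has_real_derivative Sh' t) (at t within {0..})"
    "(Ih has_real_derivative Ih' t) (at t within {0..})"
    "(Sv has_real_derivative Sv' t) (at t within {0..})"
    "(Iv has_real_derivative Iv' t) (at t within {0..})" if "t \<ge> 0" for t
    using derx[OF that] unfolding Sh_def Ih_def Sv_def Iv_def Sh'_def Ih'_def Sv'_def Iv'_def p_def N_def
    by simp_all
  have atw: "at t within {0..} = at t" if "t > 0" for t :: real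
    by (rule at_within_open_subset[of _ "{0<..}"]) (use that in auto)
  have da: "(Sh has_real_derivative Sh' t) (at t)"
    "(Ih has_real_derivative Ih' t) (at t)"
    "(Sv has_real_derivative Sv' t) (at t)"
    "(Iv has_real_derivative Iv' t) (at t)" if "t > 0" for t
    using dw[of t] atw[OF that] that by auto
  have cont: "continuous_on {-\<tau>..} Sh" "continuous_on {-\<tau>..} Ih"
    "continuous_on {-\<tau>..} Sv" "continuous_on {-\<tau>..} Iv"
    unfolding Sh_def Ih_def Sv_def Iv_def by (intro continuous_intros contx)+
  have contT: "continuous_on {T..} Sh" "continuous_on {T..} Ih"
    "continuous_on {T..} Sv" "continuous_on {T..} Iv" if "T \<ge> -\<tau>" for T
    using cont by (auto intro: continuous_on_subset simp: that)
  have phiS: "Sh s \<ge> 0" "Ih s \<ge> 0" "Sv s \<ge> 0" "Iv s \<ge> 0" "N s > 0" if "s \<in> {-\<tau>..0}" for s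
    using phi(2,3)[OF that] init[OF that] unfolding Sh_def Ih_def Sv_def Iv_def N_def by auto
  have dN: "(N has_real_derivative (\<beta>v - \<mu>v * N t)) (at t)" if "t > 0" for t
  proof -
    have "(N has_real_derivative (Sv' t + Iv' t)) (at t)"
      unfolding N_def using da(3,4)[OF that] by (auto intro!: derivative_eq_intros)
    thus ?thesis unfolding Sv'_def Iv'_def N_def by (simp add: algebra_simps)
  qed
  have contN: "continuous_on {T..} N" if "T \<ge> -\<tau>" for T
    unfolding N_def using contT[OF that] by (intro continuous_intros) auto
  have N0: "N 0 > 0" using phiS[of 0] tau by auto
  have Npos0: "N t > 0" if "t \<ge> 0" for t
  proof -
    have "N t \<ge> \<beta>v/\<mu>v + (N 0 - \<beta>v/\<mu>v) * exp (-\<mu>v*(t-0))"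
      by (rule core_global[OF mv contN dN, of 0]) (use tau that in auto)
    moreover have "exp (-\<mu>v*(t-0)) \<le> 1" "exp (-\<mu>v*(t-0)) > 0" using mv that by auto
    ultimately show ?thesis
    proof (cases "N 0 \<ge> \<beta>v/\<mu>v")
      case True
      hence "(N 0 - \<beta>v/\<mu>v) * exp (-\<mu>v*(t-0)) \<ge> 0" using mv by simp
      moreover have "\<beta>v/\<mu>v > 0" using bv mv by simp
      ultimately show ?thesis using \<open>N t \<ge> _\<close> by linarith
    next
      case False
      hence "(N 0 - \<beta>v/\<mu>v) * exp (-\<mu>v*(t-0)) \<ge> (N 0 - \<beta>v/\<mu>v) * 1"
        using \<open>exp (-\<mu>v*(t-0)) \<le> 1\<close> by (intro mult_left_mono_neg) auto
      hence "(N 0 - \<beta>v/\<mu>v) * exp (-\<mu>v*(t-0)) \<ge> N 0 - \<beta>v/\<mu>v" by simp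
      thus ?thesis using \<open>N t \<ge> _\<close> N0 by linarith
    qed
  qed
  have Npos: "N t > 0" if "t \<ge> -\<tau>" for t
    using Npos0 phiS(5) that by (cases "t \<ge> 0") auto
  have cont0: "continuous_on {0..} Sh" "continuous_on {0..} Ih" "continuous_on {0..} Sv" "continuous_on {0..} Iv"
    using contT[of 0] tau by auto
  have Sh0: "Sh t \<ge> 0" if "t \<ge> 0" for t
    by (rule zero_cross[OF cont0(1) _ dw(1) _ that]) (use phiS(1)[of 0] tau bh in \<open>auto simp: Sh'_def\<close>)
  have Sv0: "Sv t \<ge> 0" if "t \<ge> 0" for t
    by (rule zero_cross[OF cont0(3) _ dw(3) _ that]) (use phiS(3)[of 0] tau bv in \<open>auto simp: Sv'_def\<close>)
  have Shnn: "Sh t \<ge> 0" and Svnn: "Sv t \<ge> 0" if "t \<ge> -\<tau>" for t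
    using Sh0 Sv0 phiS that by (cases "t \<ge> 0"; force)+
  have Ih00: "Ih 0 > 0" using phi(4) init[of 0] tau unfolding Ih_def by auto
  have Ivnn_gen: "Iv b \<ge> 0" if "0 \<le> b" "\<And>s. 0 < s \<Longrightarrow> s < b \<Longrightarrow> Ih s \<ge> 0" for b
  proof -
    have "Iv b \<ge> 0/\<mu>v + (Iv 0 - 0/\<mu>v) * exp (-\<mu>v*(b-0))"
    proof (rule core_interval[OF mv that(1)])
      show "continuous_on {0..b} Iv" using cont0(4) by (auto intro: continuous_on_subset)
      show "(Iv has_real_derivative Iv' s) (at s)" if "0 < s" "s < b" for s using da(4) that by simp
      show "Iv' s + \<mu>v * Iv s \<ge> 0" if "0 < s" "s < b" for s
        using \<open>\<And>s. 0 < s \<Longrightarrow> s < b \<Longrightarrow> Ih s \<ge> 0\<close>[OF that] Sv0[of s] that chv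
        unfolding Iv'_def by simp
    qed
    moreover have "Iv 0 * exp (-\<mu>v*(b-0)) \<ge> 0" using phiS(4)[of 0] tau by simp
    ultimately show ?thesis by simp
  qed
  have p_nn: "p s \<ge> 0" if "s \<ge> -\<tau>" "Iv s \<ge> 0" for s
    using Npos[OF that(1)] that(2) unfolding p_def by simp
  have Ihpos0: "Ih t > 0" if "t \<ge> 0" for t
  proof (rule ccontr)
    assume nt: "\<not> Ih t > 0"
    define E where "E = {0..} \<inter> Ih -` {..0}"
    have "t \<in> E" using nt that unfolding E_def by auto
    hence Ene: "E \<noteq> {}" by auto
    have clE: "closed E" unfolding E_def
      by (intro continuous_closed_preimage cont0) auto
    have bdd: "bdd_below E" unfolding E_def by (auto intro: bdd_belowI[where m=0])
    define t1 where "t1 = Inf E"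
    have t1E: "t1 \<in> E" unfolding t1_def by (rule closed_contains_Inf[OF Ene bdd clE])
    have before: "Ih s > 0" if "0 \<le> s" "s < t1" for s
    proof (rule ccontr)
      assume "\<not> Ih s > 0"
      hence "s \<in> E" using that unfolding E_def by auto
      hence "t1 \<le> s" unfolding t1_def by (rule cInf_lower[OF _ bdd])
      thus False using that by simp
    qed
    have t1pos: "t1 > 0" using t1E Ih00 unfolding E_def by (cases "t1 = 0") auto
    have Ivt: "Iv b \<ge> 0" if "0 \<le> b" "b \<le> t1" for b
      by (rule Ivnn_gen[OF that(1)]) (use before that in \<open>smt (verit)\<close>)
    have "Ih t1 \<ge> 0/\<mu>h + (Ih 0 - 0/\<mu>h) * exp (-\<mu>h*(t1-0))"
    proof (rule core_interval[OF mh])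
      show "0 \<le> t1" using t1pos by simp
      show "continuous_on {0..t1} Ih" using cont0(2) by (auto intro: continuous_on_subset)
      show "(Ih has_real_derivative Ih' s) (at s)" if "0 < s" "s < t1" for s using da(2) that by simp
      show "Ih' s + \<mu>h * Ih s \<ge> 0" if s: "0 < s" "s < t1" for s
      proof -
        have "p (s - \<tau>) \<ge> 0"
        proof (cases "s - \<tau> \<ge> 0")
          case True thus ?thesis using p_nn Ivt[of "s - \<tau>"] s tau by auto
        next
          case False thus ?thesis using p_nn phiS(4)[of "s - \<tau>"] s tau by auto
        qed
        moreover have "Sh (s - \<tau>) \<ge> 0" using Shnn[of "s - \<tau>"] s by simp
        ultimately show ?thesis unfolding Ih'_def using cvh by simp
      qed
    qed
    moreover have "Ih 0 * exp (-\<mu>h*(t1-0)) > 0" using Ih00 by simp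
    ultimately have "Ih t1 > 0" by simp
    thus False using t1E unfolding E_def by simp
  qed
  have Ivnn0: "Iv t \<ge> 0" if "t \<ge> 0" for t
    by (rule Ivnn_gen[OF that]) (use Ihpos0 in \<open>smt (verit)\<close>)
  have Ihnn: "Ih t \<ge> 0" and Ivnn: "Iv t \<ge> 0" if "t \<ge> -\<tau>" for t
    using Ihpos0 Ivnn0 phiS that by (cases "t \<ge> 0"; force)+
  have pnn: "p t \<ge> 0" and ple1: "p t \<le> 1" if "t \<ge> -\<tau>" for t
  proof -
    show "p t \<ge> 0" using p_nn[OF that Ivnn[OF that]] .
    have "Iv t \<le> N t" using Svnn[OF that] unfolding N_def by simp
    thus "p t \<le> 1" using Npos[OF that] unfolding p_def by simp
  qed
  have dp: "(p has_real_derivative (Chv * Ih t * (1 - p t) - p t * \<beta>v / N t)) (at t)" if "t > 0" for t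
  proof -
    have Nt: "N t \<noteq> 0" using Npos0[of t] that by simp
    have "(p has_real_derivative (Iv' t * N t - Iv t * (\<beta>v - \<mu>v * N t)) / (N t * N t)) (at t)"
      unfolding p_def by (rule DERIV_divide[OF da(4)[OF that] dN[OF that] Nt])
    moreover have "(Iv' t * N t - Iv t * (\<beta>v - \<mu>v * N t)) / (N t * N t)
        = Chv * Ih t * (1 - p t) - p t * \<beta>v / N t"
    proof -
      have Sv_eq: "Sv t = N t - Iv t" unfolding N_def by simp
      show ?thesis using Nt unfolding Iv'_def p_def Sv_eq by (simp add: field_simps)
    qed
    ultimately show ?thesis by simp
  qed
  have contp: "continuous_on {T..} p" if "T \<ge> -\<tau>" for T
    unfolding p_def using contT(4)[OF that] contN[OF that] Npos that
    by (intro continuous_intros) (auto simp: less_imp_neq[symmetric])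
  have eq: "Shs > 0" "Ihs > 0" "Svs > 0" "Ivs > 0"
    "\<beta>h - Cvh * (Ivs / (Svs + Ivs)) * Shs - \<mu>h * Shs = 0"
    "Cvh * (Ivs / (Svs + Ivs)) * Shs - \<mu>h * Ihs = 0"
    "\<beta>v - Chv * Ihs * Svs - \<mu>v * Svs = 0"
    "Chv * Ihs * Svs - \<mu>v * Ivs = 0"
    using assms(9) unfolding is_pos_equilibrium_def by auto
  have h1: "\<mu>h * Shs = \<beta>h - \<mu>h * Ihs" using eq(5,6) by linarith
  have h2: "Cvh * Ivs * Shs = \<mu>h * Ihs * (Svs + Ivs)"
  proof -
    have "Svs + Ivs > 0" using eq by simp
    thus ?thesis using eq(6) by (simp add: field_simps)
  qed
  have "Chv * Ihs * (Cvh * Ivs * Shs) = Chv * Ihs * (\<mu>h * Ihs * (Svs + Ivs))" using h2 by simp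
  also have "\<dots> = \<mu>h * Ihs * (Chv * Ihs * Svs + Chv * Ihs * Ivs)" by (simp add: algebra_simps)
  also have "\<dots> = \<mu>h * Ihs * (\<mu>v * Ivs + Chv * Ihs * Ivs)" using eq(8) by simp
  finally have "(Ihs * Ivs) * (Cvh * Chv * Shs) = (Ihs * Ivs) * (\<mu>h * (\<mu>v + Chv * Ihs))"
    by (simp add: algebra_simps)
  hence h3: "Cvh * Chv * Shs = \<mu>h * (\<mu>v + Chv * Ihs)" using eq(2,4) by simp
  have "Cvh * Chv * (\<mu>h * Shs) = \<mu>h * (\<mu>h * (\<mu>v + Chv * Ihs))" using h3
    by (metis mult.left_commute)
  hence key: "\<mu>h * (Cvh * Chv * Ihs + \<mu>h * Chv * Ihs + \<mu>h * \<mu>v) = Cvh * Chv * \<beta>h"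
    unfolding h1 by (simp add: algebra_simps)
  define a where "a = (1 + \<theta>) / 2 * Ihs"
  have a: "\<theta> * Ihs < a" "a < Ihs" "a > 0" unfolding a_def using assms(10,11) eq(2)
    by (auto simp: field_simps add_pos_pos)
  have keya: "\<mu>h * (Cvh * Chv * a + \<mu>h * Chv * a + \<mu>h * \<mu>v) < Cvh * Chv * \<beta>h"
  proof -
    have "\<mu>h * (Cvh * Chv * a + \<mu>h * Chv * a + \<mu>h * \<mu>v)
        = \<mu>h * Chv * (Cvh + \<mu>h) * a + \<mu>h * \<mu>h * \<mu>v" by (simp add: algebra_simps)
    also have "\<dots> < \<mu>h * Chv * (Cvh + \<mu>h) * Ihs + \<mu>h * \<mu>h * \<mu>v"
      using a(2) mh chv cvh by simp
    also have "\<dots> = Cvh * Chv * \<beta>h" using key by (simp add: algebra_simps)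
    finally show ?thesis .
  qed
  define qf where "qf = (\<lambda>e::real. Chv * a / (Chv * a + \<beta>v / (K + e)) + e)"
  define sf where "sf = (\<lambda>e. \<beta>h / (Cvh * qf e + \<mu>h) - e)"
  define Ff where "Ff = (\<lambda>e. Cvh * sf e * (Chv * (1 - qf e)) - (\<mu>h + e) * (\<beta>v / (K - e) + e) * exp (e * \<tau>))"
  have BK: "\<beta>v / K = \<mu>v" unfolding K_def using bv mv by simp
  have q0: "qf 0 = Chv * a / (Chv * a + \<mu>v)" unfolding qf_def by (simp add: BK)
  have q0pos: "qf 0 \<ge> 0" "qf 0 < 1" unfolding q0 using a chv mv by (auto simp: divide_less_eq add_pos_pos)
  have s0: "sf 0 > 0" unfolding sf_def using q0pos bh cvh mh by (simp add: add_nonneg_pos)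
  define D where "D = Cvh * Chv * a + \<mu>h * Chv * a + \<mu>h * \<mu>v"
  have Dpos: "D > 0" unfolding D_def using cvh chv a mh mv by (simp add: add_pos_pos)
  have "Cvh * sf 0 * (Chv * (1 - qf 0)) = Cvh * Chv * \<beta>h * \<mu>v / D"
  proof -
    have P: "Chv * a + \<mu>v > 0" using chv a mv by (simp add: add_pos_pos)
    have 1: "1 - qf 0 = \<mu>v / (Chv * a + \<mu>v)" unfolding q0 using P by (simp add: field_simps)
    have 2: "Cvh * qf 0 + \<mu>h = D / (Chv * a + \<mu>v)" unfolding q0 D_def using P
      by (simp add: field_simps)
    have 3: "sf 0 = \<beta>h * (Chv * a + \<mu>v) / D" unfolding sf_def 2 using P Dpos by simp
    have gen: "Cvh * (\<beta>h * w / D) * (Chv * (\<mu>v / w)) = Cvh * Chv * \<beta>h * \<mu>v / D"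
      if "w \<noteq> 0" "D \<noteq> 0" for w D :: real using that by (simp add: field_simps)
    have "Cvh * (\<beta>h * (Chv * a + \<mu>v) / D) * (Chv * (\<mu>v / (Chv * a + \<mu>v))) = Cvh * Chv * \<beta>h * \<mu>v / D"
      by (rule gen) (use P Dpos in auto)
    thus ?thesis unfolding 1 3 .
  qed
  hence F0: "Ff 0 = \<mu>v * (Cvh * Chv * \<beta>h / D - \<mu>h)"
    unfolding Ff_def by (simp add: BK[symmetric] algebra_simps K)
  have "Cvh * Chv * \<beta>h / D > \<mu>h" using keya Dpos unfolding D_def by (simp add: field_simps)
  hence F0pos: "Ff 0 > 0" unfolding F0 using mv by simp
  have cq: "isCont qf 0"
  proof -
    have "Chv * a + \<beta>v / K > 0" using K chv a bv by (simp add: add_pos_pos)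
    thus ?thesis unfolding qf_def using K
      by (intro continuous_intros) auto
  qed
  have cs: "isCont sf 0"
  proof -
    have "Cvh * qf 0 + \<mu>h > 0" using q0pos cvh mh by (simp add: add_nonneg_pos)
    thus ?thesis unfolding sf_def using cq by (intro continuous_intros) auto
  qed
  have cF: "isCont Ff 0" unfolding Ff_def using cq cs K
    by (intro continuous_intros) auto
  have lim: "(f \<longlongrightarrow> f 0) (at_right 0)" if "isCont f 0" for f :: "real \<Rightarrow> real"
    using that unfolding isCont_def filterlim_at_split by simp
  have "eventually (\<lambda>e. e \<in> {0<..<K} \<and> Ff e > 0 \<and> qf e < 1 \<and> sf e > 0) (at_right 0)"
    using eventually_at_right_real[OF K] order_tendstoD(1)[OF lim[OF cF] F0pos]
      order_tendstoD(2)[OF lim[OF cq] q0pos(2)] order_tendstoD(1)[OF lim[OF cs] s0]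
    by eventually_elim auto
  then obtain e where e: "0 < e" "e < K" "Ff e > 0" "qf e < 1" "sf e > 0"
    using eventually_happens'[OF trivial_limit_at_right_real] by force
  define q where "q = qf e"
  define sh where "sh = sf e"
  define M where "M = \<beta>v / (K - e)"
  define \<gamma> where "\<gamma> = Chv * (1 - q)"
  have \<gamma>: "\<gamma> > 0" unfolding \<gamma>_def q_def using e chv by simp
  have cond: "Cvh * sh * \<gamma> > (\<mu>h + e) * (M + e) * exp (e * \<tau>)"
    using e(3) unfolding Ff_def sh_def \<gamma>_def q_def M_def by simp
  have Kpos: "K - e > 0" using e by simp
  have Mpos: "M > 0" unfolding M_def using bv Kpos by simp
  have qpos: "q > 0" unfolding q_def qf_def using e(1) chv a bv K
    by (intro add_nonneg_pos divide_nonneg_nonneg) (auto intro: add_nonneg_nonneg)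
  have shpos: "sh > 0" unfolding sh_def using e by simp
  show ?thesis
  proof (rule ccontr)
    assume "\<not> ?thesis"
    hence "Limsup at_top (\<lambda>t. ereal (x t $ 2)) \<le> ereal (\<theta> * Ihs)" by simp
    also have "\<dots> < ereal a" using a(1) by simp
    finally have "eventually (\<lambda>t. ereal (x t $ 2) < ereal a) at_top" by (rule Limsup_lessD)
    hence ev0: "eventually (\<lambda>t. Ih t < a) at_top" unfolding Ih_def by simp
    have c0: "continuous_on {0..} N" using contN[of 0] tau by simp
    have dN0: "(N has_real_derivative (\<beta>v - \<mu>v * N t)) (at t)" if "0 < t" for t
      using dN that by simp
    have evNu: "eventually (\<lambda>t. N t \<le> \<beta>v/\<mu>v + e) at_top"
      using core_ev_upper[OF mv c0 dN0, of "\<beta>v" e] e(1) by simp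
    have evNl: "eventually (\<lambda>t. N t \<ge> \<beta>v/\<mu>v - e) at_top"
      using core_ev_lower[OF mv c0 dN0, of "\<beta>v" e] e(1) by simp
    have "eventually (\<lambda>t. 0 \<le> t \<and> Ih t < a \<and> N t \<le> K + e \<and> N t \<ge> K - e) at_top"
      using eventually_ge_at_top[of 0] ev0 evNu evNl unfolding K_def by eventually_elim auto
    then obtain T1 where T1: "\<And>t. t \<ge> T1 \<Longrightarrow> 0 \<le> t \<and> Ih t < a \<and> N t \<le> K + e \<and> N t \<ge> K - e"
      unfolding eventually_at_top_linorder by blast
    have T1pos: "T1 \<ge> 0" using T1[of T1] by simp
    have T1t: "-\<tau> \<le> T1" using T1pos tau by simp
    have Bp: "Chv * a + \<beta>v / (K + e) > 0" using chv a bv K e by (simp add: add_pos_pos)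
    have evp: "eventually (\<lambda>t. p t \<le> Chv * a / (Chv * a + \<beta>v / (K + e)) + e) at_top"
    proof (rule core_ev_upper[OF Bp contp[OF T1t] _ _ e(1)])
      show "(p has_real_derivative (Chv * Ih t * (1 - p t) - p t * \<beta>v / N t)) (at t)" if "T1 < t" for t
        using dp that T1pos by simp
      show "Chv * Ih t * (1 - p t) - p t * \<beta>v / N t + (Chv * a + \<beta>v / (K + e)) * p t \<le> Chv * a"
        if "T1 < t" for t
      proof -
        have t: "t \<ge> -\<tau>" "t \<ge> T1" using that T1t by auto
        have i1: "Chv * Ih t * (1 - p t) \<le> Chv * a * (1 - p t)"
          using T1[OF t(2)] ple1[OF t(1)] chv by (intro mult_right_mono) auto
        have "\<beta>v / N t \<ge> \<beta>v / (K + e)"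
          using T1[OF t(2)] Npos[OF t(1)] bv by (intro divide_left_mono) auto
        hence i2: "p t * (\<beta>v / N t) \<ge> p t * (\<beta>v / (K + e))"
          using pnn[OF t(1)] by (intro mult_left_mono) auto
        have e1: "Chv * a * (1 - p t) = Chv * a - Chv * a * p t" by (simp add: algebra_simps)
        have e2: "(Chv * a + \<beta>v / (K + e)) * p t = Chv * a * p t + p t * (\<beta>v / (K + e))"
          by (simp add: algebra_simps)
        have e3: "p t * \<beta>v / N t = p t * (\<beta>v / N t)" by simp
        show ?thesis unfolding e2 e3 using i1 i2 e1 by linarith
      qed
    qed
    have "eventually (\<lambda>t. t \<ge> T1 \<and> p t \<le> q) at_top"
      using eventually_ge_at_top[of T1] evp unfolding q_def qf_def by eventually_elim auto
    then obtain T2 where T2: "\<And>t. t \<ge> T2 \<Longrightarrow> t \<ge> T1 \<and> p t \<le> q"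
      unfolding eventually_at_top_linorder by blast
    have T2t: "T2 \<ge> T1" using T2[of T2] by simp
    have T2t': "-\<tau> \<le> T2" using T2t T1t by simp
    have Bs: "Cvh * q + \<mu>h > 0" using cvh qpos mh by (simp add: add_pos_pos)
    have evs: "eventually (\<lambda>t. Sh t \<ge> \<beta>h / (Cvh * q + \<mu>h) - e) at_top"
    proof (rule core_ev_lower[OF Bs contT(1)[OF T2t'] _ _ e(1)])
      show "(Sh has_real_derivative Sh' t) (at t)" if "T2 < t" for t
        using da(1) that T2t T1pos by simp
      show "Sh' t + (Cvh * q + \<mu>h) * Sh t \<ge> \<beta>h" if "T2 < t" for t
      proof -
        have t: "t \<ge> -\<tau>" "t \<ge> T2" using that T2t' by auto
        have "Cvh * p t * Sh t \<le> Cvh * q * Sh t"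
          using T2[OF t(2)] Shnn[OF t(1)] cvh by (intro mult_right_mono) auto
        thus ?thesis unfolding Sh'_def by (simp add: algebra_simps)
      qed
    qed
    define sv0 where "sv0 = \<beta>v / (Chv * a + \<mu>v)"
    have Bv: "Chv * a + \<mu>v > 0" using chv a mv by (simp add: add_pos_pos)
    have sv0: "sv0 > 0" unfolding sv0_def using bv Bv by simp
    have evsv: "eventually (\<lambda>t. Sv t \<ge> \<beta>v / (Chv * a + \<mu>v) - sv0 / 2) at_top"
    proof (rule core_ev_lower[OF Bv contT(3)[OF T1t] _ _])
      show "(Sv has_real_derivative Sv' t) (at t)" if "T1 < t" for t
        using da(3) that T1pos by simp
      show "Sv' t + (Chv * a + \<mu>v) * Sv t \<ge> \<beta>v" if "T1 < t" for t
      proof -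
        have t: "t \<ge> -\<tau>" "t \<ge> T1" using that T1t by auto
        have "Chv * Ih t * Sv t \<le> Chv * a * Sv t"
          using T1[OF t(2)] Svnn[OF t(1)] chv by (intro mult_right_mono) auto
        thus ?thesis unfolding Sv'_def by (simp add: algebra_simps)
      qed
      show "sv0 / 2 > 0" using sv0 by simp
    qed
    have "eventually (\<lambda>t. t \<ge> T2 \<and> Sh t \<ge> sh \<and> Sv t \<ge> sv0 / 2) at_top"
      using eventually_ge_at_top[of T2] evs evsv unfolding sh_def sf_def q_def[symmetric] sv0_def[symmetric]
      by eventually_elim auto
    then obtain T3 where T3: "\<And>t. t \<ge> T3 \<Longrightarrow> t \<ge> T2 \<and> Sh t \<ge> sh \<and> Sv t \<ge> sv0 / 2"
      unfolding eventually_at_top_linorder by blast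
    have T3t: "T3 \<ge> T2" using T3[of T3] by simp
    have T3pos: "T3 \<ge> 0" using T3t T2t T1pos by simp
    have all3: "t \<ge> T1" "p t \<le> q" "Sh t \<ge> sh" "Sv t \<ge> sv0 / 2" "Ih t < a" "N t \<le> K + e" "N t \<ge> K - e"
      "t \<ge> 0" "t \<ge> -\<tau>" if "t \<ge> T3" for t
      using T3[OF that] T2[of t] T1[of t] T2t tau by auto
    define T4 where "T4 = T3 + 1"
    have IhT3: "Ih T3 > 0" using Ihpos0 T3pos by simp
    define mI where "mI = Ih T3 * exp (-\<mu>h)"
    have mI: "mI > 0" unfolding mI_def using IhT3 by simp
    have Ihlow: "Ih s \<ge> mI" if s: "T3 \<le> s" "s \<le> T4" for s
    proof -
      have "Ih s \<ge> 0/\<mu>h + (Ih T3 - 0/\<mu>h) * exp (-\<mu>h*(s-T3))"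
      proof (rule core_interval[OF mh s(1)])
        show "continuous_on {T3..s} Ih" using contT(2)[of T3] T3pos tau by (auto intro: continuous_on_subset)
        show "(Ih has_real_derivative Ih' r) (at r)" if "T3 < r" "r < s" for r
          using da(2) that T3pos by simp
        show "Ih' r + \<mu>h * Ih r \<ge> 0" if r: "T3 < r" "r < s" for r
        proof -
          have "Cvh * p (r - \<tau>) * Sh (r - \<tau>) \<ge> 0"
            using pnn[of "r - \<tau>"] Shnn[of "r - \<tau>"] r T3pos cvh by simp
          thus ?thesis unfolding Ih'_def by simp
        qed
      qed
      moreover have "exp (-\<mu>h*(s-T3)) \<ge> exp (-\<mu>h)" using s mh unfolding T4_def by simp
      hence "Ih T3 * exp (-\<mu>h*(s-T3)) \<ge> mI" unfolding mI_def using IhT3 by simp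
      ultimately show ?thesis by simp
    qed
    define A where "A = Chv * mI * (sv0 / 2)"
    have Apos: "A > 0" unfolding A_def using chv mI sv0 by simp
    have "Iv T4 \<ge> A/\<mu>v + (Iv T3 - A/\<mu>v) * exp (-\<mu>v*(T4-T3))"
    proof (rule core_interval[OF mv])
      show "T3 \<le> T4" unfolding T4_def by simp
      show "continuous_on {T3..T4} Iv" using contT(4)[of T3] T3pos tau by (auto intro: continuous_on_subset)
      show "(Iv has_real_derivative Iv' r) (at r)" if "T3 < r" "r < T4" for r
        using da(4) that T3pos by simp
      show "Iv' r + \<mu>v * Iv r \<ge> A" if r: "T3 < r" "r < T4" for r
      proof -
        have "Chv * Ih r * Sv r \<ge> Chv * mI * (sv0 / 2)"
          using Ihlow[of r] all3(4)[of r] r mI sv0 chv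
          by (simp add: mult.assoc mult_mono mult_left_mono)
        thus ?thesis unfolding Iv'_def A_def by simp
      qed
    qed
    moreover have "(Iv T3 - A/\<mu>v) * exp (-\<mu>v*(T4-T3)) \<ge> - (A/\<mu>v) * exp (-\<mu>v*(T4-T3))"
      using Ivnn0[of T3] T3pos by (intro mult_right_mono) auto
    moreover have "(A/\<mu>v) * exp (-\<mu>v*(T4-T3)) < A/\<mu>v"
    proof -
      have "exp (-\<mu>v*(T4-T3)) < 1" using mv unfolding T4_def by simp
      hence "(A/\<mu>v) * exp (-\<mu>v*(T4-T3)) < (A/\<mu>v) * 1"
        using Apos mv by (intro mult_strict_left_mono) auto
      thus ?thesis by simp
    qed
    ultimately have IvT4: "Iv T4 > 0" by simp
    have T4pos: "T4 \<ge> 0" unfolding T4_def using T3pos by simp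
    have Ivpos: "Iv t > 0" if "t \<ge> T4" for t
    proof -
      have "Iv t \<ge> 0/\<mu>v + (Iv T4 - 0/\<mu>v) * exp (-\<mu>v*(t-T4))"
      proof (rule core_global[OF mv _ _ _ that])
        show "continuous_on {T4..} Iv" using contT(4)[of T4] T4pos tau by simp
        show "(Iv has_real_derivative Iv' r) (at r)" if "T4 < r" for r
          using da(4) that T4pos by simp
        show "Iv' r + \<mu>v * Iv r \<ge> 0" if r: "T4 < r" for r
          using Ihnn[of r] Svnn[of r] r T4pos tau chv unfolding Iv'_def by simp
      qed
      moreover have "Iv T4 * exp (-\<mu>v*(t-T4)) > 0" using IvT4 by simp
      ultimately show ?thesis by simp
    qed
    have ppos: "p t > 0" if "t \<ge> T4" for t
      using Ivpos[OF that] Npos[of t] that T4pos tau unfolding p_def by simp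
    define T where "T = T4 + \<tau>"
    have TT4: "T - \<tau> = T4" unfolding T_def by simp
    have TT3: "T \<ge> T3" unfolding T_def T4_def using tau by simp
    define L where "L = (\<mu>h + e) * exp (e * \<tau>) / (Cvh * sh)"
    define R where "R = \<gamma> / (M + e)"
    have Lpos: "L > 0" unfolding L_def using mh e cvh shpos by simp
    have LR: "L < R"
    proof -
      have P1: "Cvh * sh > 0" using cvh shpos by simp
      have P2: "M + e > 0" using Mpos e by simp
      have "(\<mu>h + e) * exp (e * \<tau>) * (M + e) < \<gamma> * (Cvh * sh)"
        using cond by (simp add: algebra_simps)
      hence "(\<mu>h + e) * exp (e * \<tau>) / (Cvh * sh) < \<gamma> / (M + e)"
        using P1 P2 by (simp add: divide_less_eq less_divide_eq mult.commute mult.left_commute mult.assoc)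
      thus ?thesis unfolding L_def R_def .
    qed
    define c2 where "c2 = (L + R) / 2"
    have c2: "c2 > 0" "L < c2" "c2 < R" unfolding c2_def using Lpos LR by auto
    have c2L: "(\<mu>h + e) * exp (e * \<tau>) < Cvh * sh * c2"
    proof -
      have "L * (Cvh * sh) < c2 * (Cvh * sh)" using c2(2) cvh shpos by simp
      moreover have "L * (Cvh * sh) = (\<mu>h + e) * exp (e * \<tau>)" unfolding L_def using cvh shpos by simp
      ultimately show ?thesis by (simp add: mult.commute)
    qed
    have c2R: "(M + e) * c2 < \<gamma>"
    proof -
      have "c2 * (M + e) < R * (M + e)" using c2(3) Mpos e by simp
      moreover have "R * (M + e) = \<gamma>" unfolding R_def using Mpos e by simp
      ultimately show ?thesis by (simp add: mult.commute)
    qed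
    define u where "u = (\<lambda>t. Ih t * exp (-e*t))"
    define v where "v = (\<lambda>t. p t * exp (-e*t) / c2)"
    define pd where "pd = (\<lambda>t. Chv * Ih t * (1 - p t) - p t * \<beta>v / N t)"
    have T4t: "-\<tau> \<le> T4" using T4pos tau by simp
    have cu: "continuous_on {T4..} u" unfolding u_def using contT(2)[OF T4t]
      by (intro continuous_intros) auto
    have cv: "continuous_on {T4..} v" unfolding v_def using contp[OF T4t] c2
      by (intro continuous_intros) auto
    have upos: "u s > 0" "v s > 0" if "s \<ge> T4" for s
      unfolding u_def v_def using Ihpos0[of s] ppos[OF that] T4pos that c2 by auto
    have Wne: "{T4..T} \<noteq> {}" unfolding T_def using tau by simp
    obtain su where su: "su \<in> {T4..T}" "\<And>y. y \<in> {T4..T} \<Longrightarrow> u su \<le> u y"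
      using continuous_attains_inf[OF compact_Icc Wne continuous_on_subset[OF cu]] by auto
    obtain sv where sv: "sv \<in> {T4..T}" "\<And>y. y \<in> {T4..T} \<Longrightarrow> v sv \<le> v y"
      using continuous_attains_inf[OF compact_Icc Wne continuous_on_subset[OF cv]] by auto
    define c where "c = min (u su) (v sv) / 2"
    have cpos: "c > 0" unfolding c_def using upos[of su] upos[of sv] su(1) sv(1) by auto
    have win: "u s > c \<and> v s > c" if "T - \<tau> \<le> s" "s \<le> T" for s
    proof -
      have "s \<in> {T4..T}" using that TT4 by simp
      hence "u su \<le> u s" "v sv \<le> v s" using su sv by auto
      moreover have "u su > 0" "v sv > 0" using upos[of su] upos[of sv] su(1) sv(1) by auto
      ultimately show ?thesis unfolding c_def by auto
    qed
    have tpos: "t > 0" if "t > T" for t using that TT3 T3pos by simp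
    define ud where "ud = (\<lambda>t. (Ih' t - e * Ih t) * exp (-e*t))"
    define vd where "vd = (\<lambda>t. (pd t - e * p t) * exp (-e*t) / c2)"
    have du: "(u has_real_derivative ud t) (at t)" if "t > T" for t
      unfolding u_def ud_def using da(2)[OF tpos[OF that]]
      by (auto intro!: derivative_eq_intros simp: algebra_simps)
    have dv: "(v has_real_derivative vd t) (at t)" if "t > T" for t
      unfolding v_def vd_def using dp[OF tpos[OF that]] c2(1) unfolding pd_def
      by (auto intro!: derivative_eq_intros simp: field_simps)
    have cuT: "continuous_on {T..} u" using cu TT4 tau by (auto intro: continuous_on_subset simp: T_def)
    have cvT: "continuous_on {T..} v" using cv TT4 tau by (auto intro: continuous_on_subset simp: T_def)
    have pu: "ud t > 0" if t: "t > T" "v (t - \<tau>) \<ge> c" "u t = c" for t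
    proof -
      have td: "t - \<tau> \<ge> T3" "t - \<tau> \<ge> -\<tau>" using t TT3 T3pos unfolding T_def T4_def by auto
      define E1 where "E1 = exp (e * (t - \<tau>))"
      have E1: "E1 > 0" unfolding E1_def by simp
      have Et: "exp (e * t) = exp (e * \<tau>) * E1" unfolding E1_def by (simp flip: exp_add add: algebra_simps)
      have pl: "p (t - \<tau>) \<ge> c * c2 * E1"
        unfolding E1_def by (rule exp_scale_ge[OF c2(1)]) (use t(2) in \<open>simp add: v_def\<close>)
      have Ihe: "Ih t = c * 1 * exp (e * t)"
        by (rule exp_scale_eq[of 1]) (use t(3) in \<open>simp_all add: u_def\<close>)
      have "Cvh * p (t - \<tau>) * Sh (t - \<tau>) \<ge> Cvh * p (t - \<tau>) * sh"
        using all3(3)[OF td(1)] pnn[OF td(2)] cvh by (intro mult_left_mono) auto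
      moreover have "Cvh * p (t - \<tau>) * sh \<ge> Cvh * (c * c2 * E1) * sh"
        using pl cvh shpos by (intro mult_right_mono mult_left_mono) auto
      moreover have "Cvh * (c * c2 * E1) * sh > (\<mu>h + e) * Ih t"
      proof -
        have "(\<mu>h + e) * exp (e * \<tau>) * (c * E1) < Cvh * sh * c2 * (c * E1)"
          using c2L cpos E1 by (intro mult_strict_right_mono) auto
        moreover have "(\<mu>h + e) * exp (e * \<tau>) * (c * E1) = (\<mu>h + e) * Ih t"
          unfolding Ihe Et by (simp only: mult_ac mult_1_right mult_1_left)
        moreover have "Cvh * sh * c2 * (c * E1) = Cvh * (c * c2 * E1) * sh"
          by (simp only: mult_ac)
        ultimately show ?thesis by linarith
      qed
      moreover have "(\<mu>h + e) * Ih t = \<mu>h * Ih t + e * Ih t" by (rule distrib_right)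
      ultimately have "Ih' t - e * Ih t > 0" unfolding Ih'_def by linarith
      thus ?thesis unfolding ud_def by simp
    qed
    have pv: "vd t > 0" if t: "t > T" "u t \<ge> c" "v t = c" for t
    proof -
      have td: "t \<ge> T3" "t \<ge> -\<tau>" using t TT3 T3pos tau by auto
      define X where "X = exp (e * t)"
      have X: "X > 0" unfolding X_def by simp
      have Ihl: "Ih t \<ge> c * 1 * X"
        unfolding X_def by (rule exp_scale_ge[of 1]) (use t(2) in \<open>simp_all add: u_def\<close>)
      have pe: "p t = c * c2 * X"
        unfolding X_def by (rule exp_scale_eq[OF c2(1)]) (use t(3) in \<open>simp add: v_def\<close>)
      have i1: "Chv * Ih t * (1 - p t) \<ge> \<gamma> * Ih t"
      proof -
        have "Chv * Ih t * (1 - p t) \<ge> Chv * Ih t * (1 - q)"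
          using all3(2)[OF td(1)] Ihnn[OF td(2)] chv by (intro mult_left_mono) auto
        thus ?thesis unfolding \<gamma>_def by (simp add: algebra_simps)
      qed
      have i2: "\<gamma> * Ih t \<ge> \<gamma> * (c * X)" using Ihl \<gamma> by (intro mult_left_mono) auto
      have "\<beta>v / N t \<le> M" unfolding M_def
        using all3(7)[OF td(1)] Kpos bv by (intro divide_left_mono) auto
      hence i3: "p t * \<beta>v / N t \<le> p t * M" using pnn[OF td(2)]
        by (simp add: mult_left_mono times_divide_eq_right[symmetric] del: times_divide_eq_right)
      have "(M + e) * c2 * (c * X) < \<gamma> * (c * X)"
        using c2R cpos X by (intro mult_strict_right_mono) auto
      moreover have "(M + e) * p t = (M + e) * c2 * (c * X)" unfolding pe by (simp only: mult_ac)
      moreover have "(M + e) * p t = p t * M + e * p t" by (simp add: algebra_simps)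
      ultimately have "pd t - e * p t > 0" using i1 i2 i3 unfolding pd_def by linarith
      thus ?thesis using c2(1) unfolding vd_def by simp
    qed
    define t where "t = max T (a / (c * e))"
    have tT: "t \<ge> T" unfolding t_def by simp
    have "u t > c \<and> v t > c" by (rule cross[OF tau win du dv cuT cvT pu pv tT])
    hence "u t > c" by simp
    hence "Ih t \<ge> c * 1 * exp (e * t)"
      by (intro exp_scale_ge[of 1]) (simp_all add: u_def)
    moreover have "exp (e * t) > a / c"
    proof -
      have "a / c = e * (a / (c * e))" using e(1) cpos by (simp add: field_simps)
      also have "\<dots> \<le> e * t" unfolding t_def using e(1) by (intro mult_left_mono) auto
      also have "\<dots> < exp (e * t)" using exp_ge_add_one_self[of "e * t"] by linarith
      finally show ?thesis .
    qed
    hence "c * exp (e * t) > a" using cpos by (simp add: divide_less_eq mult.commute)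
    ultimately have "Ih t > a" by simp
    moreover have "Ih t < a" using all3(5)[of t] tT TT3 by simp
    ultimately show False by simp
  qed
qed

end
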